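(* Let $n \geq 1$, let $Q, R$ be fixed real symmetric positive semidefinite $n \times n$ matrices and $S = \begin{pmatrix} Q & 0 \\ 0 & R \end{pmatrix}$. Let $U, V$ be independent Haar-distributed random $n\times n$ orthogonal matrices with $j$-th columns $u_j, v_j$, and let $\mu = \min_{j \leq n} \left( u_j^\top Q u_j + v_j^\top R v_j \right)$. Let $N_1,\dots,N_n, M_1, \dots, M_n$ be i.i.d. $\chi^2_n$ random variables independent of $(U,V)$, and set $a_j = \begin{pmatrix} \sqrt{N_j}\, u_j \\ \sqrt{M_j}\, v_j \end{pmatrix} \in \mathbb{R}^{2n}$. Then $$\frac{1}{n}\,\mathbb{E}\left[ \min_{j \leq n} a_j^\top S a_j \right] \leq \mathbb{E}\mu \leq \frac{\operatorname{tr}(S)}{n}.$$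
   Context: $\chi^2_n$ is the chi-squared distribution with $n$ degrees of freedom. *)

theory Defs
  imports "HOL-Probability.Probability"
begin

definition chi2_density :: "nat \<Rightarrow> real \<Rightarrow> real" where
  "chi2_density k x =
     (if 0 < x then x powr (real k / 2 - 1) * exp (- x / 2)
                    / (2 powr (real k / 2) * Gamma (real k / 2))
      else 0)"

definition chi2_measure :: "nat \<Rightarrow> real measure" where
  "chi2_measure k = density lborel (\<lambda>x. ennreal (chi2_density k x))"

definition haar_orthogonal :: "(real^'n^'n) measure \<Rightarrow> bool" where
  "haar_orthogonal H \<longleftrightarrow>
     prob_space H \<and> sets H = sets (borel :: (real^'n^'n) measure) \<and>
     emeasure H {X. orthogonal_matrix X} = 1 \<and>
     (\<forall>G. orthogonal_matrix G \<longrightarrow> distr H borel (\<lambda>X. G ** X) = H)"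

definition psd_symmetric :: "real^'n^'n \<Rightarrow> bool" where
  "psd_symmetric A \<longleftrightarrow> transpose A = A \<and> (\<forall>x. 0 \<le> x \<bullet> (A *v x))"

text \<open>Block diagonal matrix diag(Q, R), indexed by the disjoint sum 'n + 'n
  (a model of {1..2n}).\<close>
definition block_diag :: "real^'n^'n \<Rightarrow> real^'n^'n \<Rightarrow> real^('n + 'n)^('n + 'n)" where
  "block_diag Q R = (\<chi> i j. case (i, j) of
       (Inl a, Inl b) \<Rightarrow> Q $ a $ b
     | (Inr a, Inr b) \<Rightarrow> R $ a $ b
     | _ \<Rightarrow> 0)"

definition stack :: "real^'n \<Rightarrow> real^'n \<Rightarrow> real^('n + 'n)" where
  "stack x y = (\<chi> i. case i of Inl a \<Rightarrow> x $ a | Inr a \<Rightarrow> y $ a)"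

end

theory Submission imports Defs begin


lemma gamma_base:
  assumes a: "a > (0::real)"
  shows "(\<integral>\<^sup>+t. ennreal (if 0 < t then t powr (a-1) / exp t else 0) \<partial>lborel) = ennreal (Gamma a)"
proof -
  have "(\<integral>\<^sup>+t. ennreal (indicator {0..} t * (t powr (a-1) / exp t)) \<partial>lborel) = ennreal (Gamma a)"
    using nn_integral_has_integral_lebesgue[OF _ Gamma_integral_real[OF a]] by simp
  moreover have "\<And>t. indicator {0..} t * (t powr (a-1) / exp t) = (if 0 < t then t powr (a-1) / exp t else 0)"
    by (auto simp: indicator_def)
  ultimately show ?thesis by simp
qed

lemma gamma_half:
  assumes a: "a > (0::real)"
  shows "(\<integral>\<^sup>+t. ennreal (if 0 < t then t powr (a-1) * exp (-t/2) else 0) \<partial>lborel) = ennreal (2 powr a * Gamma a)"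
proof -
  let ?h = "\<lambda>t. ennreal (if 0 < t then t powr (a-1) * exp (-t/2) else 0)"
  have "(\<integral>\<^sup>+t. ?h t \<partial>lborel) = ennreal \<bar>2\<bar> * (\<integral>\<^sup>+x. ?h (0 + 2 * x) \<partial>lborel)"
    by (rule nn_integral_real_affine) auto
  also have "(\<lambda>x. ?h (0 + 2 * x)) = (\<lambda>x. ennreal (2 powr (a-1)) * ennreal (if 0 < x then x powr (a-1) / exp x else 0))"
    by (auto simp: powr_mult ennreal_mult'[symmetric] exp_minus field_simps)
  also have "(\<integral>\<^sup>+x. ennreal (2 powr (a-1)) * ennreal (if 0 < x then x powr (a-1) / exp x else 0) \<partial>lborel) = ennreal (2 powr (a-1)) * ennreal (Gamma a)"
    by (subst nn_integral_cmult) (auto simp: gamma_base[OF a])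
  also have "ennreal \<bar>2\<bar> * (ennreal (2 powr (a-1)) * ennreal (Gamma a)) = ennreal (2 powr a * Gamma a)"
  proof -
    have e: "2 * (2 powr (a-1) * Gamma a) = 2 powr a * Gamma a" by (simp add: powr_diff)
    have "ennreal \<bar>2\<bar> * (ennreal (2 powr (a-1)) * ennreal (Gamma a)) = ennreal (2 * (2 powr (a-1) * Gamma a))"
      using a by (simp only: ennreal_mult Gamma_real_pos less_imp_le powr_ge_zero abs_numeral mult_nonneg_nonneg zero_le_numeral)
    then show ?thesis using e by simp
  qed
  finally show ?thesis .
qed

lemma chi2_density_eq:
  "chi2_density k x = inverse (2 powr (real k / 2) * Gamma (real k / 2)) *
     (if 0 < x then x powr (real k / 2 - 1) * exp (- x / 2) else 0)"
  by (simp add: chi2_density_def field_simps)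

lemma chi2_c_pos: "k > 0 \<Longrightarrow> 0 < 2 powr (real k / 2) * Gamma (real k / 2)"
  by (simp add: Gamma_real_pos)

lemma chi2_density_borel[measurable]: "chi2_density k \<in> borel_measurable borel"
  unfolding chi2_density_def by measurable

lemma chi2_density_nonneg: "k > 0 \<Longrightarrow> 0 \<le> chi2_density k x"
  by (simp add: chi2_density_def Gamma_real_pos)

lemma chi2_prob: assumes k: "k > 0" shows "prob_space (chi2_measure k)"
proof (rule prob_spaceI)
  let ?c = "2 powr (real k / 2) * Gamma (real k / 2)"
  have c: "?c > 0" using chi2_c_pos[OF k] .
  have "emeasure (chi2_measure k) (space (chi2_measure k)) = (\<integral>\<^sup>+x. ennreal (chi2_density k x) \<partial>lborel)"
    unfolding chi2_measure_def by (simp add: emeasure_density)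
  also have "\<dots> = (\<integral>\<^sup>+x. ennreal (inverse ?c) * ennreal (if 0 < x then x powr (real k / 2 - 1) * exp (- x / 2) else 0) \<partial>lborel)"
  proof (intro nn_integral_cong)
    fix x :: real
    show "ennreal (chi2_density k x) = ennreal (inverse ?c) * ennreal (if 0 < x then x powr (real k / 2 - 1) * exp (- x / 2) else 0)"
      unfolding chi2_density_eq[of k x] using c by (intro ennreal_mult') (meson inverse_nonnegative_iff_nonnegative less_imp_le)
  qed
  also have "\<dots> = ennreal (inverse ?c) * ennreal ?c"
    using k by (subst nn_integral_cmult) (auto simp: gamma_half)
  also have "\<dots> = ennreal (inverse ?c * ?c)" using c by (intro ennreal_mult'[symmetric]) (meson inverse_nonnegative_iff_nonnegative less_imp_le)
  also have "\<dots> = 1" using c by (simp only: left_inverse less_irrefl ennreal_1)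
  finally show "emeasure (chi2_measure k) (space (chi2_measure k)) = 1" .
qed

lemma chi2_mean: assumes k: "k > 0" shows "(\<integral>\<^sup>+x. ennreal \<bar>x\<bar> \<partial>chi2_measure k) = ennreal (real k)"
proof -
  let ?c = "2 powr (real k / 2) * Gamma (real k / 2)"
  have c: "?c > 0" using chi2_c_pos[OF k] .
  have "(\<integral>\<^sup>+x. ennreal \<bar>x\<bar> \<partial>chi2_measure k) = (\<integral>\<^sup>+x. ennreal (chi2_density k x) * ennreal \<bar>x\<bar> \<partial>lborel)"
    unfolding chi2_measure_def by (subst nn_integral_density) auto
  also have "\<dots> = (\<integral>\<^sup>+x. ennreal (inverse ?c) * ennreal (if 0 < x then x powr ((real k / 2 + 1) - 1) * exp (- x / 2) else 0) \<partial>lborel)"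
  proof (intro nn_integral_cong)
    fix x :: real
    have "chi2_density k x * \<bar>x\<bar> = inverse ?c * (if 0 < x then x powr ((real k / 2 + 1) - 1) * exp (- x / 2) else 0)"
    proof (cases "0 < x")
      case True
      have p: "x powr ((real k / 2 + 1) - 1) = x powr (real k / 2 - 1) * x"
        using True powr_add[of x "real k / 2 - 1" 1] by simp
      show ?thesis unfolding chi2_density_eq[of k x] p using True by simp
    qed (simp add: chi2_density_eq)
    then show "ennreal (chi2_density k x) * ennreal \<bar>x\<bar> = ennreal (inverse ?c) * ennreal (if 0 < x then x powr ((real k / 2 + 1) - 1) * exp (- x / 2) else 0)"
      using c k by (simp add: ennreal_mult[symmetric] chi2_density_nonneg)
  qed
  also have "\<dots> = ennreal (inverse ?c) * ennreal (2 powr (real k / 2 + 1) * Gamma (real k / 2 + 1))"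
    using k by (subst nn_integral_cmult) (auto simp: gamma_half)
  also have "\<dots> = ennreal (inverse ?c * (2 powr (real k / 2 + 1) * Gamma (real k / 2 + 1)))"
    using c k by (simp add: ennreal_mult[symmetric] Gamma_real_pos)
  also have "inverse ?c * (2 powr (real k / 2 + 1) * Gamma (real k / 2 + 1)) = real k"
  proof -
    have g: "Gamma (real k / 2 + 1) = (real k / 2) * Gamma (real k / 2)" using k nonpos_Ints_nonpos[of "real k / 2"] by (intro Gamma_plus1) auto
    have p: "2 powr (real k / 2 + 1) = 2 powr (real k / 2) * 2" by (simp add: powr_add)
    have "Gamma (real k / 2) \<noteq> 0" using c by auto
    then show ?thesis unfolding g p using c by (simp add: field_simps)
  qed
  finally show ?thesis .
qed



lemma measurable_of_distr_prob:
  assumes P: "prob_space (distr M N f)" and f: "\<And>x. x \<in> space M \<Longrightarrow> f x \<in> space N"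
  shows "f \<in> measurable M N"
proof (rule measurableI)
  show "\<And>x. x \<in> space M \<Longrightarrow> f x \<in> space N" by (rule f)
  fix A assume A: "A \<in> sets N"
  let ?D = "distr M N f"
  let ?mu = "\<lambda>A. emeasure M (f -` A \<inter> space M)"
  have ss: "sigma_sets (space N) (sets N) = sets N" by (rule sets.sigma_sets_eq)
  have em: "emeasure ?D = (\<lambda>B. if B \<in> sets N \<and> measure_space (space N) (sets N) ?mu then ?mu B else 0)"
    unfolding distr_def emeasure_measure_of_conv ss ..
  have 1: "emeasure ?D (space N) = 1" using prob_space.emeasure_space_1[OF P] by simp
  then have ms: "measure_space (space N) (sets N) ?mu" using em by (auto split: if_splits)
  have AsN: "A \<subseteq> space N" using A sets.sets_into_space by auto
  have "emeasure ?D A + emeasure ?D (space N - A) = emeasure ?D (A \<union> (space N - A))"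
    using A by (intro plus_emeasure) auto
  also have "A \<union> (space N - A) = space N" using AsN by auto
  finally have sum: "?mu A + ?mu (space N - A) = 1" using em ms A 1 by auto
  show "f -` A \<inter> space M \<in> sets M"
  proof (rule ccontr)
    assume n: "f -` A \<inter> space M \<notin> sets M"
    have eq: "f -` (space N - A) \<inter> space M = space M - (f -` A \<inter> space M)" using f by auto
    have n2: "f -` (space N - A) \<inter> space M \<notin> sets M"
    proof
      assume "f -` (space N - A) \<inter> space M \<in> sets M"
      then have "space M - (f -` (space N - A) \<inter> space M) \<in> sets M" by auto
      also have "space M - (f -` (space N - A) \<inter> space M) = f -` A \<inter> space M" using eq by auto
      finally show False using n by simp
    qed
    show False using sum n n2 by (simp add: emeasure_notin_sets)
  qed
qed



lemma sum_UNIV_plus: "(\<Sum>i\<in>(UNIV::('a::finite + 'b::finite) set). g i) = (\<Sum>i\<in>UNIV. g (Inl i)) + (\<Sum>i\<in>UNIV. g (Inr i))"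
  using sum.Plus[of "UNIV::'a set" "UNIV::'b set" g] by (simp add: UNIV_Plus_UNIV o_def)

lemma stack_block:
  fixes a b :: "real^'n" and Q R :: "real^'n^'n"
  shows "stack a b \<bullet> (block_diag Q R *v stack a b) = a \<bullet> (Q *v a) + b \<bullet> (R *v b)"
  by (simp add: stack_def block_diag_def inner_vec_def matrix_vector_mult_def sum_UNIV_plus)

lemma trace_block: "trace (block_diag Q R) = trace Q + trace R"
  by (simp add: trace_def block_diag_def sum_UNIV_plus)

lemma orth_trace:
  fixes U Q :: "real^'n^'n"
  assumes "orthogonal_matrix U"
  shows "(\<Sum>j\<in>UNIV. column j U \<bullet> (Q *v column j U)) = trace Q"
proof -
  have o: "U ** transpose U = mat 1" using assms by (simp add: orthogonal_matrix_def)
  have oo: "\<And>a b. (\<Sum>j\<in>UNIV. U $ a $ j * U $ b $ j) = (if a = b then 1 else 0)"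
  proof -
    fix a b
    have "(U ** transpose U) $ a $ b = (if a = b then 1 else 0)" using o by (simp add: mat_def)
    then show "(\<Sum>j\<in>UNIV. U $ a $ j * U $ b $ j) = (if a = b then 1 else 0)"
      by (simp add: matrix_matrix_mult_def transpose_def)
  qed
  have "(\<Sum>j\<in>UNIV. column j U \<bullet> (Q *v column j U)) = (\<Sum>j\<in>UNIV. \<Sum>a\<in>UNIV. \<Sum>b\<in>UNIV. Q $ a $ b * (U $ a $ j * U $ b $ j))"
    by (simp add: column_def inner_vec_def matrix_vector_mult_def sum_distrib_left mult_ac)
  also have "\<dots> = (\<Sum>a\<in>UNIV. \<Sum>b\<in>UNIV. \<Sum>j\<in>UNIV. Q $ a $ b * (U $ a $ j * U $ b $ j))"
    by (subst sum.swap, rule sum.cong[OF refl], rule sum.swap)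
  also have "\<dots> = (\<Sum>a\<in>UNIV. \<Sum>b\<in>UNIV. Q $ a $ b * (\<Sum>j\<in>UNIV. U $ a $ j * U $ b $ j))"
    by (simp only: sum_distrib_left)
  also have "\<dots> = (\<Sum>a\<in>UNIV. \<Sum>b\<in>UNIV. (if a = b then Q $ a $ b else 0))"
    by (simp only: oo mult_zero_right mult_1_right if_distrib)
  also have "\<dots> = trace Q"
    by (simp add: trace_def)
  finally show ?thesis .
qed

lemma card_min_le_sum:
  fixes f :: "'j::finite \<Rightarrow> real"
  shows "real CARD('j) * Min (f ` UNIV) \<le> (\<Sum>j\<in>UNIV. f j)"
proof -
  have "(\<Sum>j\<in>(UNIV::'j set). Min (f ` UNIV)) \<le> (\<Sum>j\<in>UNIV. f j)"
    by (intro sum_mono) auto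
  then show ?thesis by simp
qed



definition qf :: "real^'n^'n \<Rightarrow> real^'n^'n \<Rightarrow> 'n \<Rightarrow> real" where
  "qf Q U j = column j U \<bullet> (Q *v column j U)"

definition muf :: "real^'n^'n \<Rightarrow> real^'n^'n \<Rightarrow> ((real^'n^'n) \<times> (real^'n^'n)) \<Rightarrow> real" where
  "muf Q R UV = Min ((\<lambda>j. qf Q (fst UV) j + qf R (snd UV) j) ` UNIV)"

definition gAf :: "real^'n^'n \<Rightarrow> real^'n^'n \<Rightarrow> (((real^'n^'n) \<times> (real^'n^'n)) \<times> (('n \<Rightarrow> real) \<times> ('n \<Rightarrow> real))) \<Rightarrow> real" where
  "gAf Q R z = Min ((\<lambda>j. \<bar>fst (snd z) j\<bar> * qf Q (fst (fst z)) j + \<bar>snd (snd z) j\<bar> * qf R (snd (fst z)) j) ` UNIV)"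

lemma qf_borel[measurable]: "(\<lambda>U. qf Q U j) \<in> borel_measurable borel"
proof (rule borel_measurable_continuous_onI)
  show "continuous_on UNIV (\<lambda>U. qf Q U j)"
    unfolding qf_def column_def inner_vec_def matrix_vector_mult_def
    by (intro continuous_intros)
qed

lemma muf_borel[measurable]: "muf Q R \<in> borel_measurable (borel \<Otimes>\<^sub>M borel)"
  unfolding muf_def by measurable

lemma gAf_borel[measurable]: "gAf Q R \<in> borel_measurable ((borel \<Otimes>\<^sub>M borel) \<Otimes>\<^sub>M
                   ((\<Pi>\<^sub>M j\<in>UNIV. borel) \<Otimes>\<^sub>M (\<Pi>\<^sub>M j\<in>UNIV. borel)))"
  unfolding gAf_def by measurable


lemma sets_chi2[measurable_cong]: "sets (chi2_measure k) = sets borel"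
  by (simp add: chi2_measure_def)

lemma qf_nonneg: "psd_symmetric Q \<Longrightarrow> 0 \<le> qf Q U j"
  by (simp add: psd_symmetric_def qf_def)

lemma inner_bound:
  fixes Q R :: "real^'n^'n" and uv :: "(real^'n^'n) \<times> (real^'n^'n)"
  assumes Q: "psd_symmetric Q" and R: "psd_symmetric R"
  shows "(\<integral>\<^sup>+ nm. ennreal (gAf Q R (uv, nm)) \<partial>((\<Pi>\<^sub>M j\<in>UNIV. chi2_measure CARD('n)) \<Otimes>\<^sub>M (\<Pi>\<^sub>M j\<in>UNIV. chi2_measure CARD('n))))
         \<le> ennreal (real CARD('n) * muf Q R uv)"
proof -
  let ?n = "CARD('n)"
  let ?C = "chi2_measure ?n"
  let ?CC = "(\<Pi>\<^sub>M j\<in>(UNIV::'n set). ?C)"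
  have chip: "prob_space ?C" by (rule chi2_prob) simp
  have CCp: "prob_space ?CC" by (rule prob_space_PiM) (rule chip)
  interpret P2: pair_prob_space ?CC ?CC
    by (simp add: pair_prob_space_def pair_sigma_finite_def CCp prob_space_imp_sigma_finite)
  obtain k where k: "muf Q R uv = qf Q (fst uv) k + qf R (snd uv) k"
  proof -
    have "muf Q R uv \<in> (\<lambda>j. qf Q (fst uv) j + qf R (snd uv) j) ` UNIV"
      unfolding muf_def by (rule Min_in) auto
    then show ?thesis using that by auto
  qed
  define x where "x = qf Q (fst uv) k"
  define y where "y = qf R (snd uv) k"
  have x0: "0 \<le> x" and y0: "0 \<le> y" unfolding x_def y_def using Q R by (simp_all add: qf_nonneg)
  have comp: "(\<integral>\<^sup>+ N. ennreal \<bar>N k\<bar> \<partial>?CC) = ennreal (real ?n)"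
  proof -
    have "(\<integral>\<^sup>+ N. ennreal \<bar>N k\<bar> \<partial>?CC) = (\<integral>\<^sup>+ t. ennreal \<bar>t\<bar> \<partial>(distr ?CC ?C (\<lambda>N. N k)))"
      by (subst nn_integral_distr) auto
    also have "distr ?CC ?C (\<lambda>N. N k) = ?C"
      by (rule distr_PiM_component) (auto intro: chip)
    finally show ?thesis using chi2_mean[of ?n] by simp
  qed
  have c1: "(\<integral>\<^sup>+ nm. ennreal \<bar>fst nm k\<bar> \<partial>(?CC \<Otimes>\<^sub>M ?CC)) = ennreal (real ?n)"
  proof -
    have "(\<integral>\<^sup>+ nm. ennreal \<bar>fst nm k\<bar> \<partial>(?CC \<Otimes>\<^sub>M ?CC)) = (\<integral>\<^sup>+ N. \<integral>\<^sup>+ M. ennreal \<bar>fst (N, M) k\<bar> \<partial>?CC \<partial>?CC)"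
      by (subst sigma_finite_measure.nn_integral_fst[OF prob_space_imp_sigma_finite[OF CCp], symmetric]) auto
    also have "\<dots> = (\<integral>\<^sup>+ N. ennreal \<bar>N k\<bar> \<partial>?CC)"
      using prob_space.emeasure_space_1[OF CCp] by simp
    finally show ?thesis using comp by simp
  qed
  have c2: "(\<integral>\<^sup>+ nm. ennreal \<bar>snd nm k\<bar> \<partial>(?CC \<Otimes>\<^sub>M ?CC)) = ennreal (real ?n)"
  proof -
    have "(\<integral>\<^sup>+ nm. ennreal \<bar>snd nm k\<bar> \<partial>(?CC \<Otimes>\<^sub>M ?CC)) = (\<integral>\<^sup>+ M. \<integral>\<^sup>+ N. ennreal \<bar>snd (N, M) k\<bar> \<partial>?CC \<partial>?CC)"
      by (subst P2.nn_integral_snd[symmetric]) auto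
    also have "\<dots> = (\<integral>\<^sup>+ N. ennreal \<bar>N k\<bar> \<partial>?CC)"
      using prob_space.emeasure_space_1[OF CCp] by simp
    finally show ?thesis using comp by simp
  qed
  have "(\<integral>\<^sup>+ nm. ennreal (gAf Q R (uv, nm)) \<partial>(?CC \<Otimes>\<^sub>M ?CC))
      \<le> (\<integral>\<^sup>+ nm. ennreal x * ennreal \<bar>fst nm k\<bar> + ennreal y * ennreal \<bar>snd nm k\<bar> \<partial>(?CC \<Otimes>\<^sub>M ?CC))"
  proof (rule nn_integral_mono)
    fix nm :: "('n \<Rightarrow> real) \<times> ('n \<Rightarrow> real)"
    have "gAf Q R (uv, nm) \<le> \<bar>fst nm k\<bar> * x + \<bar>snd nm k\<bar> * y"
      unfolding gAf_def x_def y_def by (rule Min_le) auto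
    then have "ennreal (gAf Q R (uv, nm)) \<le> ennreal (x * \<bar>fst nm k\<bar> + y * \<bar>snd nm k\<bar>)"
      by (simp add: ennreal_leI mult.commute)
    also have "\<dots> = ennreal x * ennreal \<bar>fst nm k\<bar> + ennreal y * ennreal \<bar>snd nm k\<bar>"
      using x0 y0 by (simp add: ennreal_plus ennreal_mult)
    finally show "ennreal (gAf Q R (uv, nm)) \<le> ennreal x * ennreal \<bar>fst nm k\<bar> + ennreal y * ennreal \<bar>snd nm k\<bar>" .
  qed
  also have "\<dots> = ennreal x * (\<integral>\<^sup>+ nm. ennreal \<bar>fst nm k\<bar> \<partial>(?CC \<Otimes>\<^sub>M ?CC)) + ennreal y * (\<integral>\<^sup>+ nm. ennreal \<bar>snd nm k\<bar> \<partial>(?CC \<Otimes>\<^sub>M ?CC))"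
    by (subst nn_integral_add) (auto simp: nn_integral_cmult)
  also have "\<dots> = ennreal x * ennreal (real ?n) + ennreal y * ennreal (real ?n)"
    by (simp only: c1 c2)
  also have "\<dots> = ennreal (real ?n * muf Q R uv)"
  proof -
    have e1: "real ?n * muf Q R uv = x * real ?n + y * real ?n"
      unfolding k x_def y_def by (simp only: distrib_left mult.commute)
    have e2: "ennreal (x * real ?n + y * real ?n) = ennreal (x * real ?n) + ennreal (y * real ?n)"
      by (rule ennreal_plus) (use x0 y0 in auto)
    have e3: "ennreal (x * real ?n) = ennreal x * ennreal (real ?n)" by (rule ennreal_mult) (use x0 in auto)
    have e4: "ennreal (y * real ?n) = ennreal y * ennreal (real ?n)" by (rule ennreal_mult) (use y0 in auto)
    show ?thesis unfolding e1 e2 e3 e4 ..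
  qed
  finally show ?thesis .
qed


lemma quad_scale: fixes Q :: "real^'n^'n" shows "(c *\<^sub>R u) \<bullet> (Q *v (c *\<^sub>R u)) = (c * c) * (u \<bullet> (Q *v u))"
  by (simp add: matrix_vector_mult_scaleR)

lemma sqrt_sq_abs: "sqrt x * sqrt x = \<bar>x\<bar>"
  by (metis real_sqrt_abs2 real_sqrt_mult)

lemma muf_nonneg: "psd_symmetric Q \<Longrightarrow> psd_symmetric R \<Longrightarrow> 0 \<le> muf Q R uv"
  unfolding muf_def by (subst Min_ge_iff) (auto intro!: add_nonneg_nonneg qf_nonneg)

lemma gAf_nonneg: "psd_symmetric Q \<Longrightarrow> psd_symmetric R \<Longrightarrow> 0 \<le> gAf Q R z"
  unfolding gAf_def by (subst Min_ge_iff) (auto intro!: add_nonneg_nonneg mult_nonneg_nonneg qf_nonneg)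

lemma muf_bound:
  fixes Q R U V :: "real^'n^'n"
  assumes "orthogonal_matrix U" "orthogonal_matrix V"
  shows "muf Q R (U, V) \<le> trace (block_diag Q R) / real CARD('n)"
proof -
  have "real CARD('n) * muf Q R (U, V) \<le> (\<Sum>j\<in>UNIV. qf Q U j + qf R V j)"
    unfolding muf_def fst_conv snd_conv by (rule card_min_le_sum)
  also have "\<dots> = trace Q + trace R"
    using orth_trace[OF assms(1), of Q] orth_trace[OF assms(2), of R] by (simp add: sum.distrib qf_def)
  finally show ?thesis by (simp add: trace_block field_simps)
qed

lemma trace_nonneg: "psd_symmetric Q \<Longrightarrow> 0 \<le> trace (Q::real^'n^'n)"
proof -
  assume Q: "psd_symmetric Q"
  have "trace Q = (\<Sum>j\<in>UNIV. qf Q (mat 1) j)"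
    using orth_trace[OF orthogonal_matrix_id, of Q] by (simp add: qf_def)
  also have "\<dots> \<ge> 0" using Q by (intro sum_nonneg qf_nonneg)
  finally show ?thesis .
qed

theorem mainTheorem3:
  fixes P :: "'a measure"
    and Q R :: "real^'n^'n"
    and H :: "(real^'n^'n) measure"
    and U V :: "'a \<Rightarrow> real^'n^'n"
    and N M :: "'a \<Rightarrow> 'n \<Rightarrow> real"
  assumes "prob_space P"
    and "psd_symmetric Q" and "psd_symmetric R"
    and "haar_orthogonal H"
    and "distr P ((borel \<Otimes>\<^sub>M borel) \<Otimes>\<^sub>M
                   ((\<Pi>\<^sub>M j\<in>UNIV. borel) \<Otimes>\<^sub>M (\<Pi>\<^sub>M j\<in>UNIV. borel)))
            (\<lambda>\<omega>. ((U \<omega>, V \<omega>), (N \<omega>, M \<omega>)))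
         = (H \<Otimes>\<^sub>M H) \<Otimes>\<^sub>M
           ((\<Pi>\<^sub>M j\<in>UNIV. chi2_measure CARD('n)) \<Otimes>\<^sub>M (\<Pi>\<^sub>M j\<in>UNIV. chi2_measure CARD('n)))"
  shows "(1 / real CARD('n)) *
           prob_space.expectation P (\<lambda>\<omega>. Min ((\<lambda>j.
              let a = stack (sqrt (N \<omega> j) *\<^sub>R column j (U \<omega>)) (sqrt (M \<omega> j) *\<^sub>R column j (V \<omega>))
              in a \<bullet> (block_diag Q R *v a)) ` UNIV))
         \<le> prob_space.expectation P (\<lambda>\<omega>. Min ((\<lambda>j.
              column j (U \<omega>) \<bullet> (Q *v column j (U \<omega>)) + column j (V \<omega>) \<bullet> (R *v column j (V \<omega>))) ` UNIV))
       \<and> prob_space.expectation P (\<lambda>\<omega>. Min ((\<lambda>j.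
              column j (U \<omega>) \<bullet> (Q *v column j (U \<omega>)) + column j (V \<omega>) \<bullet> (R *v column j (V \<omega>))) ` UNIV))
         \<le> trace (block_diag Q R) / real CARD('n)"
proof -
  let ?n = "CARD('n)"
  define CC where "CC = (\<Pi>\<^sub>M j\<in>(UNIV::'n set). chi2_measure CARD('n))"
  define HH where "HH = H \<Otimes>\<^sub>M H"
  define C2 where "C2 = CC \<Otimes>\<^sub>M CC"
  define B where "B = HH \<Otimes>\<^sub>M C2"
  define B0 :: "(((real^'n^'n) \<times> (real^'n^'n)) \<times> (('n \<Rightarrow> real) \<times> ('n \<Rightarrow> real))) measure"
    where "B0 = (borel \<Otimes>\<^sub>M borel) \<Otimes>\<^sub>M ((\<Pi>\<^sub>M j\<in>UNIV. borel) \<Otimes>\<^sub>M (\<Pi>\<^sub>M j\<in>UNIV. borel))"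
  define Z where "Z = (\<lambda>\<omega>. ((U \<omega>, V \<omega>), (N \<omega>, M \<omega>)))"
  define c where "c = trace (block_diag Q R) / real CARD('n)"
  have Q: "psd_symmetric Q" and R: "psd_symmetric R" using assms(2,3) .
  have dist: "distr P B0 Z = B" using assms(5) unfolding B_def B0_def CC_def Z_def HH_def C2_def .
  from assms(4) have Hp: "prob_space H" and Hs: "sets H = sets borel"
      and Ho: "emeasure H {X. orthogonal_matrix X} = 1"
    unfolding haar_orthogonal_def by blast+
  have chip: "prob_space (chi2_measure ?n)" by (rule chi2_prob) simp
  have CCp: "prob_space CC" unfolding CC_def by (rule prob_space_PiM) (rule chip)
  have C2p: "prob_space C2" unfolding C2_def by (rule prob_space_pair[OF CCp CCp])
  have HHp: "prob_space HH" unfolding HH_def by (rule prob_space_pair[OF Hp Hp])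
  have Bp: "prob_space B" unfolding B_def by (rule prob_space_pair[OF HHp C2p])
  have setsB: "sets B = sets B0" unfolding B_def B0_def CC_def HH_def C2_def
    by (intro sets_pair_measure_cong sets_PiM_cong Hs refl) (simp_all add: sets_chi2)
  have spB0: "\<And>z. z \<in> space B0" unfolding B0_def by (simp add: space_pair_measure space_PiM)
  have Zm: "Z \<in> measurable P B0"
    by (rule measurable_of_distr_prob) (simp_all add: dist Bp spB0)
  have gAm0: "gAf Q R \<in> borel_measurable B0" unfolding B0_def by (rule gAf_borel)
  have mum0: "(\<lambda>z. muf Q R (fst z)) \<in> borel_measurable B0" unfolding B0_def by measurable
  have gAm: "gAf Q R \<in> borel_measurable B" by (subst measurable_cong_sets[OF setsB refl]) (rule gAm0)
  have mum: "(\<lambda>z. muf Q R (fst z)) \<in> borel_measurable B" by (subst measurable_cong_sets[OF setsB refl]) (rule mum0)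
  have EA: "prob_space.expectation P (\<lambda>\<omega>. Min ((\<lambda>j.
              let a = stack (sqrt (N \<omega> j) *\<^sub>R column j (U \<omega>)) (sqrt (M \<omega> j) *\<^sub>R column j (V \<omega>))
              in a \<bullet> (block_diag Q R *v a)) ` UNIV)) = integral\<^sup>L B (gAf Q R)"
  proof -
    have "\<And>\<omega>. Min ((\<lambda>j.
              let a = stack (sqrt (N \<omega> j) *\<^sub>R column j (U \<omega>)) (sqrt (M \<omega> j) *\<^sub>R column j (V \<omega>))
              in a \<bullet> (block_diag Q R *v a)) ` UNIV) = gAf Q R (Z \<omega>)"
      by (simp only: Let_def stack_block quad_scale sqrt_sq_abs) (simp add: gAf_def qf_def Z_def)
    then have "prob_space.expectation P (\<lambda>\<omega>. Min ((\<lambda>j.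
              let a = stack (sqrt (N \<omega> j) *\<^sub>R column j (U \<omega>)) (sqrt (M \<omega> j) *\<^sub>R column j (V \<omega>))
              in a \<bullet> (block_diag Q R *v a)) ` UNIV)) = integral\<^sup>L P (\<lambda>\<omega>. gAf Q R (Z \<omega>))" by simp
    also have "\<dots> = integral\<^sup>L (distr P B0 Z) (gAf Q R)"
      by (rule integral_distr[symmetric, OF Zm gAm0])
    finally show ?thesis by (simp add: dist)
  qed
  have Emu: "prob_space.expectation P (\<lambda>\<omega>. Min ((\<lambda>j.
              column j (U \<omega>) \<bullet> (Q *v column j (U \<omega>)) + column j (V \<omega>) \<bullet> (R *v column j (V \<omega>))) ` UNIV))
          = integral\<^sup>L B (\<lambda>z. muf Q R (fst z))"
  proof -
    have "\<And>\<omega>. Min ((\<lambda>j.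
              column j (U \<omega>) \<bullet> (Q *v column j (U \<omega>)) + column j (V \<omega>) \<bullet> (R *v column j (V \<omega>))) ` UNIV)
           = muf Q R (fst (Z \<omega>))"
      by (simp add: muf_def qf_def Z_def)
    then have "prob_space.expectation P (\<lambda>\<omega>. Min ((\<lambda>j.
              column j (U \<omega>) \<bullet> (Q *v column j (U \<omega>)) + column j (V \<omega>) \<bullet> (R *v column j (V \<omega>))) ` UNIV))
        = integral\<^sup>L P (\<lambda>\<omega>. muf Q R (fst (Z \<omega>)))" by simp
    also have "\<dots> = integral\<^sup>L (distr P B0 Z) (\<lambda>z. muf Q R (fst z))"
      by (rule integral_distr[symmetric, OF Zm mum0])
    finally show ?thesis by (simp add: dist)
  qed
  have spH: "space H = UNIV" using sets_eq_imp_space_eq[OF Hs] by simp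
  have Oset: "{X::real^'n^'n. orthogonal_matrix X} \<in> sets H"
    using Ho emeasure_notin_sets by force
  have AEH: "AE X in H. orthogonal_matrix X"
    using prob_space.AE_I_eq_1[OF Hp, of orthogonal_matrix] Ho Oset spH by simp
  interpret PH: pair_prob_space H H
    by (simp add: pair_prob_space_def pair_sigma_finite_def Hp prob_space_imp_sigma_finite)
  interpret PB: pair_prob_space HH C2
    by (simp add: pair_prob_space_def pair_sigma_finite_def HHp C2p prob_space_imp_sigma_finite)
  have AEHH: "AE x in HH. orthogonal_matrix (fst x) \<and> orthogonal_matrix (snd x)"
    unfolding HH_def
  proof (rule PH.AE_pair_measure)
    have "{x \<in> space (H \<Otimes>\<^sub>M H). orthogonal_matrix (fst x) \<and> orthogonal_matrix (snd x)}
          = {X. orthogonal_matrix X} \<times> {X. orthogonal_matrix X}"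
      by (auto simp: space_pair_measure spH)
    then show "{x \<in> space (H \<Otimes>\<^sub>M H). orthogonal_matrix (fst x) \<and> orthogonal_matrix (snd x)} \<in> sets (H \<Otimes>\<^sub>M H)"
      using Oset by simp
    show "AE x in H. AE y in H. orthogonal_matrix (fst (x, y)) \<and> orthogonal_matrix (snd (x, y))"
      using AEH
    proof eventually_elim
      case (elim x)
      show ?case using AEH by eventually_elim (simp add: elim)
    qed
  qed
  have AEB: "AE z in B. muf Q R (fst z) \<le> c"
  proof -
    have "AE z in B. orthogonal_matrix (fst (fst z)) \<and> orthogonal_matrix (snd (fst z))"
      unfolding B_def
    proof (rule PB.AE_pair_measure)
      have "{x \<in> space (HH \<Otimes>\<^sub>M C2). orthogonal_matrix (fst (fst x)) \<and> orthogonal_matrix (snd (fst x))}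
          = ({X. orthogonal_matrix X} \<times> {X. orthogonal_matrix X}) \<times> space C2"
        by (auto simp: space_pair_measure spH HH_def)
      moreover have "{X. orthogonal_matrix X} \<times> {X. orthogonal_matrix X} \<in> sets HH"
        unfolding HH_def using Oset by simp
      ultimately show "{x \<in> space (HH \<Otimes>\<^sub>M C2). orthogonal_matrix (fst (fst x)) \<and> orthogonal_matrix (snd (fst x))} \<in> sets (HH \<Otimes>\<^sub>M C2)"
        by simp
      show "AE x in HH. AE y in C2. orthogonal_matrix (fst (fst (x, y))) \<and> orthogonal_matrix (snd (fst (x, y)))"
        using AEHH by eventually_elim simp
    qed
    then show ?thesis
      by eventually_elim (auto simp: c_def intro!: muf_bound[unfolded prod.collapse])
  qed
  have c0: "0 \<le> c" unfolding c_def trace_block using trace_nonneg[OF Q] trace_nonneg[OF R] by simp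
  interpret PBp: prob_space B by (rule Bp)
  have muint: "integrable B (\<lambda>z. muf Q R (fst z))"
    using AEB mum by (intro PBp.integrable_const_bound[where B = c]) (auto simp: muf_nonneg[OF Q R] elim!: eventually_mono)
  have second: "integral\<^sup>L B (\<lambda>z. muf Q R (fst z)) \<le> c"
  proof -
    have "integral\<^sup>L B (\<lambda>z. muf Q R (fst z)) \<le> integral\<^sup>L B (\<lambda>z. c)"
      using muint AEB by (intro integral_mono_AE) auto
    then show ?thesis by (simp add: PBp.prob_space)
  qed
  have C2sf: "sigma_finite_measure C2" by (rule prob_space_imp_sigma_finite[OF C2p])
  have gAmB: "(\<lambda>z. ennreal (gAf Q R z)) \<in> borel_measurable (HH \<Otimes>\<^sub>M C2)" using gAm unfolding B_def by simp
  have mumB: "(\<lambda>z. ennreal (muf Q R (fst z))) \<in> borel_measurable (HH \<Otimes>\<^sub>M C2)" using mum unfolding B_def by simp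
  have nn1: "(\<integral>\<^sup>+ z. ennreal (gAf Q R z) \<partial>B) \<le> ennreal (real ?n) * (\<integral>\<^sup>+ x. ennreal (muf Q R x) \<partial>HH)"
  proof -
    have "(\<integral>\<^sup>+ z. ennreal (gAf Q R z) \<partial>B) = (\<integral>\<^sup>+ x. \<integral>\<^sup>+ y. ennreal (gAf Q R (x, y)) \<partial>C2 \<partial>HH)"
      unfolding B_def by (rule sigma_finite_measure.nn_integral_fst[OF C2sf gAmB, symmetric])
    also have "\<dots> \<le> (\<integral>\<^sup>+ x. ennreal (real ?n * muf Q R x) \<partial>HH)"
      by (intro nn_integral_mono) (simp add: C2_def CC_def inner_bound[OF Q R])
    also have "\<dots> = (\<integral>\<^sup>+ x. ennreal (real ?n) * ennreal (muf Q R x) \<partial>HH)"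
      by (intro nn_integral_cong) (rule ennreal_mult; simp add: muf_nonneg[OF Q R])
    also have "\<dots> = ennreal (real ?n) * (\<integral>\<^sup>+ x. ennreal (muf Q R x) \<partial>HH)"
    proof (rule nn_integral_cmult)
      have mufHH[measurable]: "muf Q R \<in> borel_measurable HH" unfolding HH_def
        by (subst measurable_cong_sets[OF sets_pair_measure_cong[OF Hs Hs] refl]) (rule muf_borel)
      show "(\<lambda>x. ennreal (muf Q R x)) \<in> borel_measurable HH" by measurable
    qed
    finally show ?thesis .
  qed
  have nn2: "(\<integral>\<^sup>+ z. ennreal (muf Q R (fst z)) \<partial>B) = (\<integral>\<^sup>+ x. ennreal (muf Q R x) \<partial>HH)"
  proof -
    have "(\<integral>\<^sup>+ z. ennreal (muf Q R (fst z)) \<partial>B) = (\<integral>\<^sup>+ x. \<integral>\<^sup>+ y. ennreal (muf Q R (fst (x, y))) \<partial>C2 \<partial>HH)"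
      unfolding B_def by (rule sigma_finite_measure.nn_integral_fst[OF C2sf mumB, symmetric])
    also have "\<dots> = (\<integral>\<^sup>+ x. ennreal (muf Q R x) \<partial>HH)"
      using prob_space.emeasure_space_1[OF C2p] by simp
    finally show ?thesis .
  qed
  have gA_nn: "integral\<^sup>L B (gAf Q R) = enn2real (\<integral>\<^sup>+ z. ennreal (gAf Q R z) \<partial>B)"
    by (rule integral_eq_nn_integral[OF gAm]) (simp add: gAf_nonneg[OF Q R])
  have mu_nn: "integral\<^sup>L B (\<lambda>z. muf Q R (fst z)) = enn2real (\<integral>\<^sup>+ z. ennreal (muf Q R (fst z)) \<partial>B)"
    by (rule integral_eq_nn_integral[OF mum]) (simp add: muf_nonneg[OF Q R])
  have fin: "(\<integral>\<^sup>+ z. ennreal (muf Q R (fst z)) \<partial>B) < \<infinity>"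
    using integrableD(2)[OF muint] by (simp add: less_top)
  have first: "(1 / real ?n) * integral\<^sup>L B (gAf Q R) \<le> integral\<^sup>L B (\<lambda>z. muf Q R (fst z))"
  proof -
    let ?X = "\<integral>\<^sup>+ z. ennreal (gAf Q R z) \<partial>B"
    let ?Y = "\<integral>\<^sup>+ z. ennreal (muf Q R (fst z)) \<partial>B"
    have le: "?X \<le> ennreal (real ?n) * ?Y" using nn1 nn2 by simp
    have "ennreal (real ?n) * ?Y < \<infinity>" using fin by (simp add: ennreal_mult_less_top)
    then have "enn2real ?X \<le> enn2real (ennreal (real ?n) * ?Y)" by (intro enn2real_mono[OF le]) simp
    also have "\<dots> = real ?n * enn2real ?Y" by (simp add: enn2real_mult)
    finally have "enn2real ?X \<le> real ?n * enn2real ?Y" .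
    then show ?thesis unfolding gA_nn mu_nn by (simp add: field_simps)
  qed
  show ?thesis using first second unfolding EA Emu c_def by simp
qed

end
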